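(* Let $X$ be a real Banach space and let $A \subset X$ be a compact set not containing the zero vector. Let $\{ f_i : 1 \le i \le m\} \subset S_{X^*}$ be a collection of weak*-exposed points of $B_{X^*}$ such that $\max\{ f_i(y) : 1 \le i \le m\} > 0$ for each $y \in A$. Then $A$ has a ball-covering consisting of $m$ balls.
   Context: $B_{X^*}$, $S_{X^*}$ are the closed unit ball and unit sphere of the dual $X^*$. Let $\Psi : X \to X^{**}$ be the canonical embedding. A point $f_0 \in B_{X^*}$ is a weak*-exposed point of $B_{X^*}$ if there is $x \in X$ with $f_0(x) = \sup\{ f(x) : f \in B_{X^*}\}$ and $\{ f \in B_{X^*} : f(x) = f_0(x)\} = \{f_0\}$ (i.e. $\Psi(x)$ exposes $f_0$). A ball-covering of a set $A \subset X$ is a collection of open balls $B(c, r) = \{ z : \|c - z\| < r\}$, none of which contains the zero vector (i.e. $0 < r \le \|c\|$), whose union contains $A$. *)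

theory Defs
  imports "HOL-Analysis.Analysis"
begin

definition dual_ball :: "('a::real_normed_vector \<Rightarrow>\<^sub>L real) set" where
  "dual_ball = {f. norm f \<le> 1}"

definition dual_sphere :: "('a::real_normed_vector \<Rightarrow>\<^sub>L real) set" where
  "dual_sphere = {f. norm f = 1}"

definition weak_star_exposed :: "('a::real_normed_vector \<Rightarrow>\<^sub>L real) \<Rightarrow> bool" where
  "weak_star_exposed f0 \<longleftrightarrow> f0 \<in> dual_ball \<and>
     (\<exists>x::'a. blinfun_apply f0 x = (SUP f\<in>dual_ball. blinfun_apply f x) \<and>
            {f \<in> dual_ball. blinfun_apply f x = blinfun_apply f0 x} = {f0})"

definition ball_covering :: "'a::real_normed_vector set \<Rightarrow> ('a \<times> real) set \<Rightarrow> bool" where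
  "ball_covering A Bs \<longleftrightarrow> (\<forall>(c, r) \<in> Bs. 0 < r \<and> r \<le> norm c) \<and>
     A \<subseteq> (\<Union>(c, r) \<in> Bs. ball c r)"

end

theory Submission
  imports Defs
begin

definition sublin :: "('a::real_vector \<Rightarrow> real) \<Rightarrow> bool" where
  "sublin q \<longleftrightarrow> (\<forall>a v. 0 \<le> a \<longrightarrow> q (a *\<^sub>R v) = a * q v) \<and> (\<forall>u v. q (u + v) \<le> q u + q v)"

lemma sublin_zero: "sublin q \<Longrightarrow> q 0 = 0"
  unfolding sublin_def by (metis mult_zero_left order_refl scaleR_zero_left)

lemma sublin_homog: "sublin q \<Longrightarrow> 0 \<le> a \<Longrightarrow> q (a *\<^sub>R v) = a * q v"
  unfolding sublin_def by blast

lemma sublin_add: "sublin q \<Longrightarrow> q (u + v) \<le> q u + q v"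
  unfolding sublin_def by blast

lemma sublin_lower: "sublin q \<Longrightarrow> - q (- v) \<le> q v"
  using sublin_add[of q v "-v"] sublin_zero[of q] by simp

lemma sublin_norm: "sublin norm"
  unfolding sublin_def by (auto simp: norm_triangle_ineq)

definition extq :: "('a::real_vector \<Rightarrow> real) \<Rightarrow> 'a \<Rightarrow> real \<Rightarrow> 'a \<Rightarrow> real" where
  "extq q w c v = Inf ((\<lambda>t. q (v + t *\<^sub>R w) - t * c) ` {0..})"

lemma ext_ge: "(\<And>t. 0 \<le> t \<Longrightarrow> r \<le> q (v + t *\<^sub>R w) - t * c) \<Longrightarrow> r \<le> extq q w c v"
  unfolding extq_def by (rule cInf_greatest) auto

lemma ext_bdd:
  assumes "sublin q" "c \<le> q w" "0 \<le> t"
  shows "- q (- v) \<le> q (v + t *\<^sub>R w) - t * c"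
proof -
  have "q (t *\<^sub>R w) \<le> q (v + t *\<^sub>R w) + q (-v)"
    using sublin_add[OF assms(1), of "v + t *\<^sub>R w" "-v"] by simp
  moreover have "q (t *\<^sub>R w) = t * q w" using sublin_homog[OF assms(1) assms(3)] .
  moreover have "t * c \<le> t * q w" using assms(2,3) by (simp add: mult_left_mono)
  ultimately show ?thesis by linarith
qed

lemma ext_le:
  assumes "sublin q" "c \<le> q w" "0 \<le> t"
  shows "extq q w c v \<le> q (v + t *\<^sub>R w) - t * c"
  unfolding extq_def
proof (rule cInf_lower)
  show "q (v + t *\<^sub>R w) - t * c \<in> (\<lambda>t. q (v + t *\<^sub>R w) - t * c) ` {0..}" using assms(3) by auto
  show "bdd_below ((\<lambda>t. q (v + t *\<^sub>R w) - t * c) ` {0..})"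
    unfolding bdd_below_def using ext_bdd[OF assms(1,2)] by auto
qed

lemma ext_props:
  assumes q: "sublin q" and c: "c \<le> q w"
  shows "sublin (extq q w c)" "\<And>v. extq q w c v \<le> q v" "extq q w c (-w) \<le> - c"
proof -
  note le = ext_le[OF q c] and ge = ext_ge[of _ q _ w c]
  show "extq q w c v \<le> q v" for v using le[of 0 v] by simp
  show "extq q w c (-w) \<le> - c" using le[of 1 "-w"] sublin_zero[OF q] by simp
  have hom: "extq q w c (a *\<^sub>R v) = a * extq q w c v" if a: "0 \<le> a" for a v
  proof (cases "a = 0")
    case True
    have "extq q w c 0 \<le> 0" using le[of 0 0] sublin_zero[OF q] by simp
    moreover have "0 \<le> extq q w c 0"
      by (rule ge) (use ext_bdd[OF q c, of _ 0] sublin_zero[OF q] in auto)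
    ultimately show ?thesis using True by simp
  next
    case False
    then have a: "0 < a" using a by simp
    have "extq q w c (a *\<^sub>R v) \<le> a * extq q w c v"
    proof -
      have "extq q w c (a *\<^sub>R v) / a \<le> extq q w c v"
      proof (rule ge)
        fix t :: real assume t: "0 \<le> t"
        have "extq q w c (a *\<^sub>R v) \<le> q (a *\<^sub>R v + (a*t) *\<^sub>R w) - (a*t) * c"
          using le[of "a*t"] a t by simp
        also have "a *\<^sub>R v + (a*t) *\<^sub>R w = a *\<^sub>R (v + t *\<^sub>R w)" by (simp add: algebra_simps)
        also have "q (a *\<^sub>R (v + t *\<^sub>R w)) = a * q (v + t *\<^sub>R w)" using sublin_homog[OF q] a by simp
        finally have "extq q w c (a *\<^sub>R v) \<le> a * (q (v + t *\<^sub>R w) - t * c)" by (simp add: algebra_simps)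
        then show "extq q w c (a *\<^sub>R v) / a \<le> q (v + t *\<^sub>R w) - t * c" using a by (simp add: field_simps)
      qed
      then show ?thesis using a by (simp add: field_simps)
    qed
    moreover have "a * extq q w c v \<le> extq q w c (a *\<^sub>R v)"
    proof (rule ge)
      fix t :: real assume t: "0 \<le> t"
      have "extq q w c v \<le> q (v + (t/a) *\<^sub>R w) - (t/a) * c" using le[of "t/a"] a t by simp
      then have i: "a * extq q w c v \<le> a * (q (v + (t/a) *\<^sub>R w) - (t/a) * c)" using a by simp
      have h: "q (a *\<^sub>R (v + (t/a) *\<^sub>R w)) = a * q (v + (t/a) *\<^sub>R w)"
        by (rule sublin_homog[OF q]) (use a in simp)
      have e: "a *\<^sub>R (v + (t/a) *\<^sub>R w) = a *\<^sub>R v + t *\<^sub>R w" using a by (simp add: algebra_simps)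
      have "a * (q (v + (t/a) *\<^sub>R w) - (t/a) * c) = q (a *\<^sub>R v + t *\<^sub>R w) - t * c"
        using h e a by (simp add: algebra_simps)
      with i show "a * extq q w c v \<le> q (a *\<^sub>R v + t *\<^sub>R w) - t * c" by simp
    qed
    ultimately show ?thesis by linarith
  qed
  have add: "extq q w c (u + v) \<le> extq q w c u + extq q w c v" for u v
  proof -
    have "extq q w c (u + v) - extq q w c v \<le> q (u + t1 *\<^sub>R w) - t1 * c" if t1: "0 \<le> t1" for t1
    proof -
      have "extq q w c (u + v) - (q (u + t1 *\<^sub>R w) - t1 * c) \<le> extq q w c v"
      proof (rule ge)
        fix t2 :: real assume t2: "0 \<le> t2"
        have "extq q w c (u + v) \<le> q (u + v + (t1 + t2) *\<^sub>R w) - (t1 + t2) * c" using le t1 t2 by simp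
        also have "u + v + (t1 + t2) *\<^sub>R w = (u + t1 *\<^sub>R w) + (v + t2 *\<^sub>R w)" by (simp add: algebra_simps)
        finally show "extq q w c (u + v) - (q (u + t1 *\<^sub>R w) - t1 * c) \<le> q (v + t2 *\<^sub>R w) - t2 * c"
          using sublin_add[OF q, of "u + t1 *\<^sub>R w" "v + t2 *\<^sub>R w"] by (simp add: algebra_simps)
      qed
      then show ?thesis by linarith
    qed
    then have "extq q w c (u + v) - extq q w c v \<le> extq q w c u" by (rule ge)
    then show ?thesis by linarith
  qed
  show "sublin (extq q w c)" unfolding sublin_def using hom add by blast
qed


lemma chain_inf_sublin:
  fixes p :: "'a::real_vector \<Rightarrow> real"
  assumes p: "sublin p" and C: "C \<noteq> {}" "\<And>q. q \<in> C \<Longrightarrow> sublin q \<and> (\<forall>v. q v \<le> p v)"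
    and ch: "\<And>q1 q2. q1 \<in> C \<Longrightarrow> q2 \<in> C \<Longrightarrow> (\<forall>v. q1 v \<le> q2 v) \<or> (\<forall>v. q2 v \<le> q1 v)"
  defines "u \<equiv> \<lambda>v. Inf ((\<lambda>q. q v) ` C)"
  shows "sublin u" "\<And>v. u v \<le> p v" "\<And>q v. q \<in> C \<Longrightarrow> u v \<le> q v"
proof -
  have bdd: "bdd_below ((\<lambda>q. q v) ` C)" for v
    unfolding bdd_below_def
  proof (rule exI[of _ "- p (- v)"], intro ballI)
    fix r assume "r \<in> (\<lambda>q. q v) ` C"
    then obtain q where q: "q \<in> C" "r = q v" by blast
    have "- q (- v) \<le> q v" using sublin_lower C(2)[OF q(1)] by blast
    moreover have "q (- v) \<le> p (- v)" using C(2)[OF q(1)] by blast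
    ultimately show "- p (- v) \<le> r" using q by linarith
  qed
  have le: "u v \<le> q v" if "q \<in> C" for q v
    unfolding u_def by (rule cInf_lower) (use that bdd in auto)
  have ge: "r \<le> u v" if "\<And>q. q \<in> C \<Longrightarrow> r \<le> q v" for r v
    unfolding u_def by (rule cInf_greatest) (use that C(1) in auto)
  show "u v \<le> q v" if "q \<in> C" for q v using le that .
  obtain q0 where q0: "q0 \<in> C" using C(1) by blast
  show "u v \<le> p v" for v using le[OF q0, of v] C(2)[OF q0] by (meson order_trans)
  have hom: "u (a *\<^sub>R v) = a * u v" if a: "0 \<le> a" for a v
  proof (cases "a = 0")
    case True
    have "u 0 \<le> 0" using le[OF q0, of 0] sublin_zero[of q0] C(2)[OF q0] by simp
    moreover have "0 \<le> u 0" by (rule ge) (use sublin_zero C(2) in fastforce)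
    ultimately have "u 0 = 0" by simp
    then show ?thesis using True by simp
  next
    case False
    then have a: "0 < a" using a by simp
    have h: "q (a *\<^sub>R v) = a * q v" if "q \<in> C" for q using sublin_homog[of q a v] C(2)[OF that] a by simp
    have "u (a *\<^sub>R v) / a \<le> u v"
    proof (rule ge)
      fix q assume q: "q \<in> C"
      have "u (a *\<^sub>R v) \<le> a * q v" using le[OF q, of "a *\<^sub>R v"] h[OF q] by simp
      then show "u (a *\<^sub>R v) / a \<le> q v" using a by (simp add: pos_divide_le_eq mult.commute)
    qed
    moreover have "a * u v \<le> u (a *\<^sub>R v)"
    proof (rule ge)
      fix q assume q: "q \<in> C"
      have "a * u v \<le> a * q v" using le[OF q, of v] a by (simp add: mult_left_mono)
      then show "a * u v \<le> q (a *\<^sub>R v)" using h[OF q] by simp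
    qed
    ultimately show ?thesis using a by (simp add: field_simps)
  qed
  have add: "u (x + y) \<le> u x + u y" for x y
  proof -
    have "u (x + y) - u y \<le> q1 x" if q1: "q1 \<in> C" for q1
    proof -
      have "u (x + y) - q1 x \<le> u y"
      proof (rule ge)
        fix q2 assume q2: "q2 \<in> C"
        show "u (x + y) - q1 x \<le> q2 y"
        proof (cases "\<forall>v. q1 v \<le> q2 v")
          case True
          have "q1 (x + y) \<le> q1 x + q1 y" using sublin_add[of q1 x y] C(2)[OF q1] by blast
          moreover have "q1 y \<le> q2 y" using True by blast
          ultimately show ?thesis using le[OF q1, of "x+y"] by linarith
        next
          case False
          then have "\<forall>v. q2 v \<le> q1 v" using ch[OF q1 q2] by blast
          then have "q2 x \<le> q1 x" by blast
          moreover have "q2 (x + y) \<le> q2 x + q2 y" using sublin_add[of q2 x y] C(2)[OF q2] by blast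
          ultimately show ?thesis using le[OF q2, of "x+y"] by linarith
        qed
      qed
      then show ?thesis by linarith
    qed
    then have "u (x + y) - u y \<le> u x" by (rule ge)
    then show ?thesis by linarith
  qed
  show "sublin u" unfolding sublin_def
  proof (intro conjI allI impI)
    fix a :: real and v assume "0 \<le> a" then show "u (a *\<^sub>R v) = a * u v" by (rule hom)
  next
    fix x y show "u (x + y) \<le> u x + u y" by (rule add)
  qed
qed

lemma sublin_min_linear:
  fixes m :: "'a::real_vector \<Rightarrow> real"
  assumes m: "sublin m" and minq: "\<And>q. sublin q \<Longrightarrow> (\<forall>v. q v \<le> m v) \<Longrightarrow> q = m"
  shows "linear m"
proof -
  have neg: "m (- z) = - m z" for z
  proof -
    have "extq m z (m z) = m"
      by (rule minq) (use ext_props[OF m, of "m z" z] in auto)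
    then have "m (-z) \<le> - m z" using ext_props(3)[OF m, of "m z" z] by simp
    then show ?thesis using sublin_lower[OF m, of "-z"] by simp
  qed
  have add: "m (x + y) = m x + m y" for x y
  proof -
    have "m x \<le> m (x + y) + m (- y)" using sublin_add[OF m, of "x + y" "-y"] by simp
    then show ?thesis using sublin_add[OF m, of x y] neg[of y] by linarith
  qed
  have sc: "m (c *\<^sub>R x) = c * m x" for c x
  proof (cases "0 \<le> c")
    case True then show ?thesis using sublin_homog[OF m] by blast
  next
    case False
    then have "m ((-c) *\<^sub>R x) = (-c) * m x" using sublin_homog[OF m, of "-c"] by simp
    then show ?thesis using neg[of "(-c) *\<^sub>R x"] by simp
  qed
  show ?thesis by (rule linearI) (use add sc in auto)
qed

lemma hahn_banach_sublin:
  fixes p :: "'a::real_vector \<Rightarrow> real"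
  assumes p: "sublin p"
  shows "\<exists>G. linear G \<and> (\<forall>v. G v \<le> p v)"
proof -
  define A where "A = {q. sublin q \<and> (\<forall>v. q v \<le> p v)}"
  define P where "P = (\<lambda>(a::'a \<Rightarrow> real) b. \<forall>v. b v \<le> a v)"
  have po: "partial_order_on A (relation_of P A)"
      proof (rule partial_order_on_relation_ofI)
    show "P a a" for a by (simp add: P_def)
    show "P a c" if "P a b" "P b c" for a b c using that unfolding P_def by (meson order_trans)
    show "a = b" if "P a b" "P b a" for a b
    proof
      fix v show "a v = b v" using that unfolding P_def by (meson order_antisym)
    qed
  qed
  have "\<exists>m\<in>A. \<forall>a\<in>A. P m a \<longrightarrow> a = m"
  proof (rule predicate_Zorn[OF po])
    fix C assume Cc: "C \<in> Chains (relation_of P A)"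
    show "\<exists>u\<in>A. \<forall>a\<in>C. P a u"
    proof (cases "C = {}")
      case True
      have "p \<in> A" unfolding A_def using p by blast
      then show ?thesis using True by blast
    next
      case False
      have CA: "q \<in> C \<Longrightarrow> sublin q \<and> (\<forall>v. q v \<le> p v)" for q
        using Cc unfolding Chains_def relation_of_def A_def by blast
      have ch: "q1 \<in> C \<Longrightarrow> q2 \<in> C \<Longrightarrow> (\<forall>v. q1 v \<le> q2 v) \<or> (\<forall>v. q2 v \<le> q1 v)" for q1 q2
        using Cc unfolding Chains_def relation_of_def P_def by blast
      note r = chain_inf_sublin[OF p False CA ch]
      show ?thesis
      proof (rule bexI[of _ "\<lambda>v. Inf ((\<lambda>q. q v) ` C)"])
        show "(\<lambda>v. Inf ((\<lambda>q. q v) ` C)) \<in> A" unfolding A_def using r(1,2) by blast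
        show "\<forall>a\<in>C. P a (\<lambda>v. Inf ((\<lambda>q. q v) ` C))" unfolding P_def using r(3) by blast
      qed
    qed
  qed
  then obtain m where mA: "m \<in> A" and mx: "\<forall>a\<in>A. P m a \<longrightarrow> a = m" by blast
  have "linear m"
  proof (rule sublin_min_linear)
    show "sublin m" using mA by (simp add: A_def)
    fix q assume "sublin q" "\<forall>v. q v \<le> m v"
    then have "q \<in> A" "P m q" using mA unfolding A_def P_def by (blast intro: order_trans)+
    then show "q = m" using mx by blast
  qed
  moreover have "\<forall>v. m v \<le> p v" using mA unfolding A_def by blast
  ultimately show ?thesis by blast
qed


lemma exposed_ray:
  fixes f :: "'a::real_normed_vector \<Rightarrow>\<^sub>L real"
  assumes fb: "f \<in> dual_ball"
    and sup: "blinfun_apply f x = (SUP g\<in>dual_ball. blinfun_apply g x)"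
    and uniq: "{g \<in> dual_ball. blinfun_apply g x = blinfun_apply f x} = {f}"
    and fy: "blinfun_apply f y > 0"
  shows "\<exists>t\<ge>0. norm (t *\<^sub>R x - y) < t * norm x"
proof (rule ccontr)
  assume "\<not> ?thesis"
  then have H: "\<And>t. 0 \<le> t \<Longrightarrow> t * norm x \<le> norm (t *\<^sub>R x - y)" by (auto simp: not_less)
  define q1 where "q1 = extq norm x (norm x)"
  have q1: "sublin q1" "\<And>v. q1 v \<le> norm v" "q1 (-x) \<le> - norm x"
    using ext_props[OF sublin_norm, of "norm x" x] unfolding q1_def by auto
  have q1y: "0 \<le> q1 (-y)" unfolding q1_def
  proof (rule ext_ge)
    fix t :: real assume t: "0 \<le> t"
    have "norm (-y + t *\<^sub>R x) = norm (t *\<^sub>R x - y)" by (simp add: algebra_simps)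
    then show "0 \<le> norm (-y + t *\<^sub>R x) - t * norm x" using H[OF t] by simp
  qed
  define q2 where "q2 = extq q1 (-y) 0"
  have q2: "sublin q2" "\<And>v. q2 v \<le> q1 v" "q2 (- (-y)) \<le> - 0"
    using ext_props[OF q1(1), of 0 "-y"] q1y unfolding q2_def by auto
  obtain G where G: "linear G" "\<And>v. G v \<le> q2 v" using hahn_banach_sublin[OF q2(1)] by blast
  have Gn: "G v \<le> norm v" for v using G(2)[of v] q2(2)[of v] q1(2)[of v] by linarith
  have Gneg: "G (- v) = - G v" for v using G(1) by (simp add: linear_neg)
  have Gabs: "\<bar>G v\<bar> \<le> norm v" for v using Gn[of v] Gn[of "-v"] Gneg[of v] by simp
  have Gx: "G x = norm x"
    using G(2)[of "-x"] q2(2)[of "-x"] q1(3) Gneg[of x] Gn[of x] by linarith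
  have Gy: "G y \<le> 0" using G(2)[of y] q2(3) by simp
  have bl: "bounded_linear G"
  proof (rule bounded_linear.intro[OF G(1)])
    show "bounded_linear_axioms G" unfolding bounded_linear_axioms_def
      by (rule exI[of _ 1]) (use Gabs in simp)
  qed
  define g where "g = Blinfun G"
  have ga: "blinfun_apply g = G" unfolding g_def using bounded_linear_Blinfun_apply[OF bl] .
  have gb: "g \<in> dual_ball" unfolding dual_ball_def
    by (simp, rule norm_blinfun_bound) (use Gabs ga in simp_all)
  have bnd: "blinfun_apply h x \<le> norm x" if "h \<in> dual_ball" for h :: "'a \<Rightarrow>\<^sub>L real"
  proof -
    have "blinfun_apply h x \<le> norm h * norm x" using norm_blinfun[of h x] by simp
    also have "\<dots> \<le> 1 * norm x" using that unfolding dual_ball_def by (intro mult_right_mono) auto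
    finally show ?thesis by simp
  qed
  have "G x \<le> blinfun_apply f x" unfolding sup
  proof -
    have "blinfun_apply g x \<le> (SUP h\<in>dual_ball. blinfun_apply h x)"
      by (rule cSUP_upper[OF gb]) (use bnd in \<open>auto simp: bdd_above_def\<close>)
    then show "G x \<le> (SUP h\<in>dual_ball. blinfun_apply h x)" using ga by simp
  qed
  then have "blinfun_apply g x = blinfun_apply f x" using bnd[OF fb] Gx ga by simp
  then have "g \<in> {g \<in> dual_ball. blinfun_apply g x = blinfun_apply f x}" using gb by blast
  then have "g = f" using uniq by blast
  then show False using fy Gy ga by simp
qed

lemma ray_mono:
  fixes x y :: "'a::real_normed_vector"
  assumes "norm (t *\<^sub>R x - y) < t * norm x" "t \<le> s"
  shows "norm (s *\<^sub>R x - y) < s * norm x"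
proof -
  have e: "s *\<^sub>R x - y = (t *\<^sub>R x - y) + (s - t) *\<^sub>R x" by (simp add: algebra_simps)
  have "norm ((t *\<^sub>R x - y) + (s - t) *\<^sub>R x) \<le> norm (t *\<^sub>R x - y) + norm ((s - t) *\<^sub>R x)"
    by (rule norm_triangle_ineq)
  also have "norm ((s - t) *\<^sub>R x) = (s - t) * norm x" using assms(2) by simp
  finally have "norm (s *\<^sub>R x - y) \<le> norm (t *\<^sub>R x - y) + (s - t) * norm x" unfolding e .
  also have "\<dots> < t * norm x + (s - t) * norm x" using assms(1) by simp
  finally show ?thesis by (simp add: algebra_simps)
qed

theorem mainTheorem5:
  fixes A :: "'a::banach set" and f :: "nat \<Rightarrow> ('a \<Rightarrow>\<^sub>L real)" and m :: nat
  assumes "compact A" and "0 \<notin> A" and "1 \<le> m"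
    and "\<forall>i\<in>{1..m}. f i \<in> dual_sphere \<and> weak_star_exposed (f i)"
    and "\<forall>y\<in>A. Max ((\<lambda>i. blinfun_apply (f i) y) ` {1..m}) > 0"
  shows "\<exists>c :: nat \<Rightarrow> 'a. \<exists>r :: nat \<Rightarrow> real.
           ball_covering A ((\<lambda>i. (c i, r i)) ` {1..m})"
proof -
  define E where "E i x \<longleftrightarrow> blinfun_apply (f i) x = (SUP g\<in>dual_ball. blinfun_apply g x) \<and>
            {g \<in> dual_ball. blinfun_apply g x = blinfun_apply (f i) x} = {f i}" for i x
  define X where "X i = (SOME x. E i x)" for i
  have XE: "E i (X i)" if "i \<in> {1..m}" for i
  proof -
    have "\<exists>x. E i x" using assms(4) that unfolding weak_star_exposed_def E_def by blast
    then show ?thesis unfolding X_def by (rule someI_ex)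
  qed
  have fball: "f i \<in> dual_ball" if "i \<in> {1..m}" for i
    using assms(4) that unfolding dual_sphere_def dual_ball_def by auto
  have Xnz: "X i \<noteq> 0" if i: "i \<in> {1..m}" for i
  proof
    assume "X i = 0"
    then have "{g \<in> dual_ball. blinfun_apply g 0 = blinfun_apply (f i) 0} = {f i}"
      using XE[OF i] unfolding E_def by simp
    moreover have "(0 :: 'a \<Rightarrow>\<^sub>L real) \<in> dual_ball" unfolding dual_ball_def by simp
    then have "(0 :: 'a \<Rightarrow>\<^sub>L real) \<in> {g \<in> dual_ball. blinfun_apply g 0 = blinfun_apply (f i) 0}"
      by (simp add: blinfun.zero_right)
    ultimately have "(0 :: 'a \<Rightarrow>\<^sub>L real) \<in> {f i}" by (simp only:)
    then have "(0 :: 'a \<Rightarrow>\<^sub>L real) = f i" by simp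
    moreover have "norm (f i) = 1" using assms(4) i unfolding dual_sphere_def by auto
    ultimately show False by auto
  qed
  define U where "U n = (\<Union>i\<in>{1..m}. ball (real n *\<^sub>R X i) (real n * norm (X i)))" for n :: nat
  have cover: "A \<subseteq> (\<Union>n. U n)"
  proof
    fix y assume y: "y \<in> A"
    have fin: "finite ((\<lambda>i. blinfun_apply (f i) y) ` {1..m})" "((\<lambda>i. blinfun_apply (f i) y) ` {1..m}) \<noteq> {}"
      using assms(3) by auto
    obtain i where i: "i \<in> {1..m}" "Max ((\<lambda>i. blinfun_apply (f i) y) ` {1..m}) = blinfun_apply (f i) y"
      using Max_in[OF fin] by auto
    have m0: "Max ((\<lambda>i. blinfun_apply (f i) y) ` {1..m}) > 0" using assms(5) y by blast
    have fy: "blinfun_apply (f i) y > 0" using m0 unfolding i(2) .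
    obtain t where t: "t \<ge> 0" "norm (t *\<^sub>R X i - y) < t * norm (X i)"
      using exposed_ray[OF fball[OF i(1)] _ _ fy] XE[OF i(1)] unfolding E_def by blast
    obtain n :: nat where n: "t \<le> real n" using real_arch_simple by blast
    have "norm (real n *\<^sub>R X i - y) < real n * norm (X i)" by (rule ray_mono[OF t(2) n])
    then have "y \<in> ball (real n *\<^sub>R X i) (real n * norm (X i))" by (simp add: dist_norm)
    then have "y \<in> U n" unfolding U_def using i(1) by blast
    then show "y \<in> (\<Union>n. U n)" by blast
  qed
  have opn: "open (U n)" for n unfolding U_def by (intro open_UN ballI open_ball)
  obtain C' where C': "finite C'" "A \<subseteq> (\<Union>n\<in>C'. U n)"
  proof (rule compactE_image[OF assms(1), of UNIV U])
    show "open (U n)" for n by (rule opn)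
    show "A \<subseteq> \<Union> (U ` UNIV)" using cover .
  qed
  define N where "N = Suc (Max (insert 0 C'))"
  have Nge: "n \<le> N" if "n \<in> C'" for n
  proof -
    have "n \<le> Max (insert 0 C')" using Max_ge[of "insert 0 C'" n] C'(1) that by blast
    then show ?thesis unfolding N_def by simp
  qed
  define c where "c i = real N *\<^sub>R X i" for i
  define r where "r i = real N * norm (X i)" for i
  have "ball_covering A ((\<lambda>i. (c i, r i)) ` {1..m})"
    unfolding ball_covering_def
  proof (intro conjI)
    show "\<forall>(c, r) \<in> (\<lambda>i. (c i, r i)) ` {1..m}. 0 < r \<and> r \<le> norm c"
    proof
      fix p assume "p \<in> (\<lambda>i. (c i, r i)) ` {1..m}"
      then obtain i where i: "i \<in> {1..m}" "p = (c i, r i)" by blast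
      have N0: "0 < real N" unfolding N_def by simp
      have "0 < norm (X i)" using Xnz[OF i(1)] by simp
      then have "0 < r i" "r i \<le> norm (c i)" using N0 unfolding r_def c_def by simp_all
      then show "case p of (c, r) \<Rightarrow> 0 < r \<and> r \<le> norm c" using i(2) by simp
    qed
    show "A \<subseteq> (\<Union>(c, r) \<in> (\<lambda>i. (c i, r i)) ` {1..m}. ball c r)"
    proof
      fix y assume "y \<in> A"
      then obtain n where n: "n \<in> C'" "y \<in> U n" using C'(2) by blast
      then obtain i where i1: "i \<in> {1..m}" and "y \<in> ball (real n *\<^sub>R X i) (real n * norm (X i))"
        unfolding U_def by blast
      then have i: "i \<in> {1..m}" "norm (real n *\<^sub>R X i - y) < real n * norm (X i)"
        by (simp_all add: dist_norm)
      have "norm (real N *\<^sub>R X i - y) < real N * norm (X i)"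
        by (rule ray_mono[OF i(2)]) (use Nge[OF n(1)] in simp)
      then have "y \<in> ball (c i) (r i)" by (simp add: c_def r_def dist_norm)
      then show "y \<in> (\<Union>(c, r) \<in> (\<lambda>i. (c i, r i)) ` {1..m}. ball c r)" using i(1) by blast
    qed
  qed
  then show ?thesis by blast
qed

end
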